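(* For $a,b\ge0$ let $p_\bullet(a,b)=(p_k(a,b))_{k\in\mathbb{Z}}:=\mathrm{Poi}_a*\widehat{\mathrm{Poi}}_b$, i.e. $p_k(a,b)=\mathbb{P}(X-Y=k)$ for independent $X\sim\mathrm{Poi}_a$, $Y\sim\mathrm{Poi}_b$. Then for all $k\in\mathbb{Z}$, \[ \sqrt{p_k(a,b)\,p_{-k}(a,b)}=e^{-(\sqrt a-\sqrt b)^2}\,p_k\big(\sqrt{ab},\sqrt{ab}\big). \]
   Context: $\mathrm{Poi}_\lambda$ is the Poisson distribution with parameter $\lambda$, with $\mathrm{Poi}_0$ the point mass at $0$; $\widehat{\mathrm{Poi}}_b$ is its image under $k\mapsto-k$. *)

theory Defs
  imports "HOL-Probability.Probability"
begin

text \<open>Poisson distribution with parameter lam >= 0; Poi_0 is the point mass at 0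
  (the library's poisson_pmf is only specified for positive rate).\<close>
definition poi :: "real \<Rightarrow> nat pmf" where
  "poi lam = (if lam = 0 then return_pmf 0 else poisson_pmf lam)"

definition skellam :: "real \<Rightarrow> real \<Rightarrow> int pmf" where
  "skellam a b = map_pmf (\<lambda>(x, y). int x - int y) (pair_pmf (poi a) (poi b))"

definition pk :: "int \<Rightarrow> real \<Rightarrow> real \<Rightarrow> real" where
  "pk k a b = pmf (skellam a b) k"

end

theory Submission imports Defs begin
lemma pmf_poi: "lam \<ge> 0 \<Longrightarrow> pmf (poi lam) n = exp (-lam) * lam ^ n / fact n"
  by (cases "n = 0") (auto simp: poi_def pmf_return)

lemma skellam_bind: "skellam a b = bind_pmf (poi b) (\<lambda>y. map_pmf (\<lambda>x. int x - int y) (poi a))"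
  unfolding skellam_def pair_pmf_def
  apply (subst bind_commute_pmf)
  apply (simp add: map_bind_pmf bind_return_pmf map_pmf_def bind_assoc_pmf)
  done

lemma pk_neg: "pk (-k) a b = pk k b a"
proof -
  have "skellam b a = map_pmf uminus (skellam a b)"
    unfolding skellam_def
    apply (subst pair_commute_pmf)
    apply (simp add: pmf.map_comp o_def case_prod_beta)
    done
  then show ?thesis unfolding pk_def
    by (metis inj_def neg_equal_iff_equal pmf_map_inj' minus_minus)
qed

lemma pk_sums:
  assumes "a \<ge> 0" "b \<ge> 0"
  shows "(\<lambda>y. pmf (poi b) y * pmf (poi a) (m + y)) sums pk (int m) a b"
proof -
  have h: "\<And>y. pmf (map_pmf (\<lambda>x. int x - int y) (poi a)) (int m) = pmf (poi a) (m + y)"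
  proof -
    fix y
    have i: "inj (\<lambda>x. int x - int y)" by (auto simp: inj_def)
    have "pmf (map_pmf (\<lambda>x. int x - int y) (poi a)) ((\<lambda>x. int x - int y) (m + y)) = pmf (poi a) (m + y)"
      by (rule pmf_map_inj'[OF i])
    then show "pmf (map_pmf (\<lambda>x. int x - int y) (poi a)) (int m) = pmf (poi a) (m + y)"
      by simp
  qed
  have e: "ennreal (pk (int m) a b) = (\<Sum>y. ennreal (pmf (poi b) y * pmf (poi a) (m + y)))"
  proof -
    have "ennreal (pk (int m) a b) = (\<integral>\<^sup>+y. ennreal (pmf (poi b) y) * ennreal (pmf (map_pmf (\<lambda>x. int x - int y) (poi a)) (int m)) \<partial>count_space UNIV)"
      unfolding pk_def skellam_bind ennreal_pmf_bind nn_integral_measure_pmf by (rule refl)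
    also have "\<dots> = (\<Sum>y. ennreal (pmf (poi b) y) * ennreal (pmf (map_pmf (\<lambda>x. int x - int y) (poi a)) (int m)))"
      by (rule nn_integral_count_space_nat)
    also have "\<dots> = (\<Sum>y. ennreal (pmf (poi b) y * pmf (poi a) (m + y)))"
      by (simp only: h ennreal_mult'[OF pmf_nonneg, symmetric])
    finally show ?thesis .
  qed
  have s: "summable (\<lambda>y. pmf (poi b) y * pmf (poi a) (m + y))"
    proof (rule summable_suminf_not_top)
    show "(\<Sum>y. ennreal (pmf (poi b) y * pmf (poi a) (m + y))) \<noteq> \<top>"
      using e[symmetric] by (metis ennreal_neq_top)
  qed (rule mult_nonneg_nonneg; rule pmf_nonneg)
  have "(\<Sum>y. ennreal (pmf (poi b) y * pmf (poi a) (m + y))) = ennreal (\<Sum>y. pmf (poi b) y * pmf (poi a) (m + y))"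
    by (rule suminf_ennreal2[OF _ s]) (auto intro: mult_nonneg_nonneg)
  with e have "ennreal (pk (int m) a b) = ennreal (\<Sum>y. pmf (poi b) y * pmf (poi a) (m + y))"
    by (rule trans)
  then have "pk (int m) a b = (\<Sum>y. pmf (poi b) y * pmf (poi a) (m + y))"
    by (subst (asm) ennreal_inj) (auto simp: pk_def intro: suminf_nonneg[OF s] mult_nonneg_nonneg)
  with s show ?thesis by (simp add: summable_sums)
qed

definition G :: "nat \<Rightarrow> real \<Rightarrow> real" where
  "G m x = (\<Sum>y. x ^ y / (fact y * fact (m + y)))"

lemma G_summable: "(x::real) \<ge> 0 \<Longrightarrow> summable (\<lambda>y. x ^ y / (fact y * fact (m + y)))"
proof (rule summable_comparison_test[OF _ summable_exp[of x]])
  assume x: "x \<ge> 0"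
  show "\<exists>N. \<forall>n\<ge>N. norm (x ^ n / (fact n * fact (m + n))) \<le> inverse (fact n) * x ^ n"
  proof (intro exI allI impI)
    fix n :: nat
    have f: "(1::real) \<le> fact (m + n)" by simp
    have "x ^ n / (fact n * fact (m + n)) \<le> x ^ n / fact n"
      using x f by (intro divide_left_mono) (auto intro: mult_pos_pos)
    then show "norm (x ^ n / (fact n * fact (m + n))) \<le> inverse (fact n) * x ^ n"
      using x by (simp add: field_simps)
  qed
qed

lemma G_nonneg: "x \<ge> 0 \<Longrightarrow> G m x \<ge> 0"
  unfolding G_def by (rule suminf_nonneg[OF G_summable]) auto

lemma pk_G:
  assumes "a \<ge> 0" "b \<ge> 0"
  shows "pk (int m) a b = exp (-(a+b)) * a ^ m * G m (a * b)"
proof -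
  have eq: "pmf (poi b) y * pmf (poi a) (m + y) = (exp (-(a+b)) * a ^ m) * ((a * b) ^ y / (fact y * fact (m + y)))" for y
    using assms by (simp add: pmf_poi power_add power_mult_distrib exp_add[symmetric] field_simps)
  have "(\<lambda>y. (exp (-(a+b)) * a ^ m) * ((a * b) ^ y / (fact y * fact (m + y)))) sums ((exp (-(a+b)) * a ^ m) * G m (a * b))"
    unfolding G_def using assms by (intro sums_mult summable_sums G_summable) simp
  with pk_sums[OF assms, of m] show ?thesis
    by (simp add: eq sums_unique2)
qed

lemma main_nat:
  fixes a b :: real
  assumes a: "a \<ge> 0" and b: "b \<ge> 0"
  shows "sqrt (pk (int m) a b * pk (- int m) a b)
           = exp (- (sqrt a - sqrt b)\<^sup>2) * pk (int m) (sqrt (a * b)) (sqrt (a * b))"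
proof -
  define c where "c = sqrt (a * b)"
  have c0: "c \<ge> 0" and cc: "c * c = a * b" using a b by (auto simp: c_def)
  have sc: "sqrt a * sqrt b = c" using a b by (simp add: c_def real_sqrt_mult)
  have e1: "pk (int m) a b = exp (-(a+b)) * a ^ m * G m (a * b)" by (rule pk_G[OF a b])
  have e2: "pk (- int m) a b = exp (-(a+b)) * b ^ m * G m (a * b)"
    using pk_G[OF b a, of m] by (simp add: pk_neg add.commute mult.commute)
  have e3: "pk (int m) c c = exp (-(2*c)) * c ^ m * G m (a * b)"
    using pk_G[OF c0 c0, of m] cc by simp
  have hc: "(c ^ m)\<^sup>2 = a ^ m * b ^ m"
    by (metis cc power2_eq_square power_mult_distrib power_mult power_mult_distrib mult.commute power_even_eq)
  have P: "pk (int m) a b * pk (- int m) a b = (exp (-(a+b)) * c ^ m * G m (a * b))\<^sup>2"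
  proof -
    have "(exp (-(a+b)) * c ^ m * G m (a * b))\<^sup>2 = (exp (-(a+b)))\<^sup>2 * (c ^ m)\<^sup>2 * (G m (a * b))\<^sup>2"
      by (simp only: power_mult_distrib)
    also have "\<dots> = (exp (-(a+b)))\<^sup>2 * (a ^ m * b ^ m) * (G m (a * b))\<^sup>2"
      by (simp only: hc)
    also have "\<dots> = pk (int m) a b * pk (- int m) a b"
      unfolding e1 e2 power2_eq_square by (simp only: mult_ac)
    finally show ?thesis by (rule sym)
  qed
  have nn: "exp (-(a+b)) * c ^ m * G m (a * b) \<ge> 0"
    using c0 G_nonneg[of "a*b" m] a b by simp
  have L: "sqrt (pk (int m) a b * pk (- int m) a b) = exp (-(a+b)) * c ^ m * G m (a * b)"
    unfolding P real_sqrt_abs using nn by (rule abs_of_nonneg)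
  have sq: "(sqrt a - sqrt b)\<^sup>2 = a + b - 2 * c"
    using a b sc by (simp add: power2_eq_square algebra_simps)
  have "exp (- (sqrt a - sqrt b)\<^sup>2) * exp (-(2*c)) = exp (-(a+b))"
    unfolding sq exp_add[symmetric] by simp
  then show ?thesis
    unfolding L c_def[symmetric] e3 by (simp only: mult.assoc[symmetric])
qed

theorem lemma1:
  fixes a b :: real and k :: int
  assumes "a \<ge> 0" and "b \<ge> 0"
  shows "sqrt (pk k a b * pk (-k) a b)
           = exp (- (sqrt a - sqrt b)\<^sup>2) * pk k (sqrt (a * b)) (sqrt (a * b))"
proof (cases "k \<ge> 0")
  case True
  then obtain m where "k = int m" by (metis nonneg_int_cases)
  then show ?thesis using main_nat[OF assms] by simp
next
  case False
  then obtain m where k: "k = - int m" by (metis le_cases neg_0_le_iff_le nonneg_int_cases minus_minus)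
  have "pk k (sqrt (a * b)) (sqrt (a * b)) = pk (int m) (sqrt (a * b)) (sqrt (a * b))"
    unfolding k by (simp add: pk_neg)
  then show ?thesis using main_nat[OF assms, of m] k by (simp add: mult.commute)
qed
end
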